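(* Let $\widetilde{SL}_2(\mathbb{R})$ be identified with $\mathbb{R}^3_+=\{(x,y,z):z>0\}$ endowed with the metric $ds^2=\left(dx+\frac{dy}{z}\right)^2+\frac{dy^2+dz^2}{z^2}$, and let $\pi:\mathbb{R}^3_+\to\mathbb{H}^2$, $\pi(x,y,z)=(y,z)$, where $\mathbb{H}^2$ is the upper half-plane with metric $\frac{dy^2+dz^2}{z^2}$ (a Riemannian submersion with minimal fibres). Let $\gamma:I\to\mathbb{H}^2$ be a curve parametrised by arc length with signed curvature $k$. Then the cylinder $S=\pi^{-1}(\gamma(I))$ is a biminimal surface with respect to $\lambda$ in $\widetilde{SL}_2(\mathbb{R})$ if and only if $\gamma$ is a biminimal curve with respect to $\lambda+1$ in $\mathbb{H}^2$, i.e. $k''=k^3+(2+\lambda)k$.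
   Context: For a map $\phi$: tension field $\tau(\phi)=\operatorname{trace}\nabla d\phi$, bitension field $\tau_2(\phi)=\sum_i(\nabla^\phi_{e_i}\nabla^\phi_{e_i}-\nabla^\phi_{\nabla_{e_i}e_i})\tau(\phi)+\sum_iR^N(d\phi(e_i),\tau(\phi))d\phi(e_i)$, with $R(X,Y)Z=\nabla_{[X,Y]}Z-\nabla_X\nabla_YZ+\nabla_Y\nabla_XZ$. An immersion is biminimal with respect to $\lambda\in\mathbb{R}$ if $[\tau_2(\phi)]^\perp-\lambda[\tau(\phi)]^\perp=0$ ($\perp$ = normal component). For an arc-length curve on a surface of Gaussian curvature $G$ with signed curvature $k$, biminimality with respect to $\mu$ means $k''-k^3+kG-\mu k=0$ (here $G=-1$). *)

theory Defs
  imports "HOL-Analysis.Analysis"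
begin

text \<open>A Riemannian metric on an open subset of the coordinate space real^'n is given by
  its Gram matrix field  h :: real^'n => real^'n^'n.  Vectors are coordinate vectors.\<close>

definition pd :: "(real^'n \<Rightarrow> real) \<Rightarrow> 'n \<Rightarrow> real^'n \<Rightarrow> real" where
  "pd f i p = deriv (\<lambda>r. f (p + r *\<^sub>R axis i 1)) 0"

definition ip :: "real^'n^'n \<Rightarrow> real^'n \<Rightarrow> real^'n \<Rightarrow> real" where
  "ip H X Y = (\<Sum>i\<in>UNIV. \<Sum>j\<in>UNIV. X $ i * H $ i $ j * Y $ j)"

definition Chr :: "(real^'n \<Rightarrow> real^'n^'n) \<Rightarrow> 'n \<Rightarrow> 'n \<Rightarrow> 'n \<Rightarrow> real^'n \<Rightarrow> real" where
  "Chr h k i j p = (1/2) * (\<Sum>l\<in>UNIV. matrix_inv (h p) $ k $ l *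
      (pd (\<lambda>q. h q $ j $ l) i p + pd (\<lambda>q. h q $ i $ l) j p - pd (\<lambda>q. h q $ i $ j) l p))"

definition nablaN :: "(real^'n \<Rightarrow> real^'n^'n) \<Rightarrow> (real^'n \<Rightarrow> real^'n) \<Rightarrow> (real^'n \<Rightarrow> real^'n)
    \<Rightarrow> real^'n \<Rightarrow> real^'n" where
  "nablaN h X Y p = (\<chi> d. (\<Sum>a\<in>UNIV. X p $ a * pd (\<lambda>q. Y q $ d) a p)
      + (\<Sum>a\<in>UNIV. \<Sum>b\<in>UNIV. Chr h d a b p * X p $ a * Y p $ b))"

definition lie_bracket :: "(real^'n \<Rightarrow> real^'n) \<Rightarrow> (real^'n \<Rightarrow> real^'n) \<Rightarrow> real^'n \<Rightarrow> real^'n" where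
  "lie_bracket X Y p = (\<chi> d. \<Sum>a\<in>UNIV. X p $ a * pd (\<lambda>q. Y q $ d) a p - Y p $ a * pd (\<lambda>q. X q $ d) a p)"

text \<open>Curvature with the paper's sign convention
  R(X,Y)Z = nabla_[X,Y] Z - nabla_X nabla_Y Z + nabla_Y nabla_X Z, evaluated at p on the
  tangent vectors u v w (extended to constant coordinate fields; R is tensorial).\<close>
definition curv_fields :: "(real^'n \<Rightarrow> real^'n^'n) \<Rightarrow> (real^'n \<Rightarrow> real^'n) \<Rightarrow> (real^'n \<Rightarrow> real^'n)
    \<Rightarrow> (real^'n \<Rightarrow> real^'n) \<Rightarrow> real^'n \<Rightarrow> real^'n" where
  "curv_fields h X Y Z p = nablaN h (lie_bracket X Y) Z p - nablaN h X (nablaN h Y Z) p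
      + nablaN h Y (nablaN h X Z) p"

definition curv :: "(real^'n \<Rightarrow> real^'n^'n) \<Rightarrow> real^'n \<Rightarrow> real^'n \<Rightarrow> real^'n \<Rightarrow> real^'n \<Rightarrow> real^'n" where
  "curv h p u v w = curv_fields h (\<lambda>_. u) (\<lambda>_. v) (\<lambda>_. w) p"

definition dphi :: "(real^'m \<Rightarrow> real^'n) \<Rightarrow> 'm \<Rightarrow> real^'m \<Rightarrow> real^'n" where
  "dphi \<phi> a u = (\<chi> c. pd (\<lambda>v. \<phi> v $ c) a u)"

definition induced :: "(real^'n \<Rightarrow> real^'n^'n) \<Rightarrow> (real^'m \<Rightarrow> real^'n) \<Rightarrow> real^'m \<Rightarrow> real^'m^'m" where
  "induced h \<phi> u = (\<chi> i j. ip (h (\<phi> u)) (dphi \<phi> i u) (dphi \<phi> j u))"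

definition covD :: "(real^'n \<Rightarrow> real^'n^'n) \<Rightarrow> (real^'m \<Rightarrow> real^'n) \<Rightarrow> (real^'m \<Rightarrow> real^'n)
    \<Rightarrow> 'm \<Rightarrow> real^'m \<Rightarrow> real^'n" where
  "covD h \<phi> V a u = (\<chi> c. pd (\<lambda>v. V v $ c) a u
      + (\<Sum>\<alpha>\<in>UNIV. \<Sum>\<beta>\<in>UNIV. Chr h c \<alpha> \<beta> (\<phi> u) * pd (\<lambda>v. \<phi> v $ \<alpha>) a u * V u $ \<beta>))"

definition tension :: "(real^'n \<Rightarrow> real^'n^'n) \<Rightarrow> (real^'m \<Rightarrow> real^'n) \<Rightarrow> real^'m \<Rightarrow> real^'n" where
  "tension h \<phi> u = (\<Sum>i\<in>UNIV. \<Sum>j\<in>UNIV. matrix_inv (induced h \<phi> u) $ i $ j *\<^sub>R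
      (covD h \<phi> (dphi \<phi> j) i u - (\<Sum>k\<in>UNIV. Chr (induced h \<phi>) k i j u *\<^sub>R dphi \<phi> k u)))"

definition bitension :: "(real^'n \<Rightarrow> real^'n^'n) \<Rightarrow> (real^'m \<Rightarrow> real^'n) \<Rightarrow> real^'m \<Rightarrow> real^'n" where
  "bitension h \<phi> u = (let \<tau> = tension h \<phi>; g = induced h \<phi> in
     (\<Sum>i\<in>UNIV. \<Sum>j\<in>UNIV. matrix_inv (g u) $ i $ j *\<^sub>R
       (covD h \<phi> (\<lambda>v. covD h \<phi> \<tau> j v) i u
        - (\<Sum>k\<in>UNIV. Chr g k i j u *\<^sub>R covD h \<phi> \<tau> k u)
        + curv h (\<phi> u) (dphi \<phi> i u) (\<tau> u) (dphi \<phi> j u))))"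

definition normal_part :: "(real^'n \<Rightarrow> real^'n^'n) \<Rightarrow> (real^'m \<Rightarrow> real^'n) \<Rightarrow> real^'m \<Rightarrow> real^'n \<Rightarrow> real^'n" where
  "normal_part h \<phi> u w = w - (\<Sum>i\<in>UNIV. \<Sum>j\<in>UNIV. (matrix_inv (induced h \<phi> u) $ i $ j
       * ip (h (\<phi> u)) w (dphi \<phi> i u)) *\<^sub>R dphi \<phi> j u)"

definition biminimal_on :: "(real^'n \<Rightarrow> real^'n^'n) \<Rightarrow> real \<Rightarrow> (real^'m \<Rightarrow> real^'n) \<Rightarrow> (real^'m) set \<Rightarrow> bool" where
  "biminimal_on h lam \<phi> U \<longleftrightarrow> (\<forall>u\<in>U.
      normal_part h \<phi> u (bitension h \<phi> u) - lam *\<^sub>R normal_part h \<phi> u (tension h \<phi> u) = 0)"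

text \<open>SL2~ as R^3_+ with coordinates (x,y,z) = (v$1,v$2,v$3) and metric
  (dx + dy/z)^2 + (dy^2 + dz^2)/z^2.\<close>
definition sl2_metric :: "real^3 \<Rightarrow> real^3^3" where
  "sl2_metric p = (let z = p $ 3 in
     vector [vector [1, 1/z, 0], vector [1/z, 2/z^2, 0], vector [0, 0, 1/z^2]])"

text \<open>H^2 as upper half plane with coordinates (y,z) = (w$1,w$2) and metric (dy^2+dz^2)/z^2.\<close>
definition hyp_metric :: "real^2 \<Rightarrow> real^2^2" where
  "hyp_metric p = (let z = p $ 2 in vector [vector [1/z^2, 0], vector [0, 1/z^2]])"

definition proj_H :: "real^3 \<Rightarrow> real^2" where
  "proj_H p = vector [p $ 2, p $ 3]"

definition smooth_curve_on :: "real set \<Rightarrow> (real \<Rightarrow> real^2) \<Rightarrow> bool" where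
  "smooth_curve_on I \<gamma> \<longleftrightarrow> (\<forall>c n. \<forall>t\<in>I. (deriv ^^ n) (\<lambda>s. \<gamma> s $ c) differentiable (at t))"

definition vel :: "(real \<Rightarrow> real^2) \<Rightarrow> real \<Rightarrow> real^2" where
  "vel \<gamma> t = (\<chi> c. deriv (\<lambda>s. \<gamma> s $ c) t)"

definition covD_curve :: "(real^2 \<Rightarrow> real^2^2) \<Rightarrow> (real \<Rightarrow> real^2) \<Rightarrow> (real \<Rightarrow> real^2) \<Rightarrow> real \<Rightarrow> real^2" where
  "covD_curve h \<gamma> V t = (\<chi> c. deriv (\<lambda>s. V s $ c) t
      + (\<Sum>a\<in>UNIV. \<Sum>b\<in>UNIV. Chr h c a b (\<gamma> t) * vel \<gamma> t $ a * V t $ b))"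

text \<open>Positively oriented unit normal: rotation of the unit tangent by +pi/2
  (the hyperbolic metric is conformal to the Euclidean one).\<close>
definition rot90 :: "real^2 \<Rightarrow> real^2" where
  "rot90 v = vector [- v $ 2, v $ 1]"

definition signed_curvature :: "(real \<Rightarrow> real^2) \<Rightarrow> real \<Rightarrow> real" where
  "signed_curvature \<gamma> t = ip (hyp_metric (\<gamma> t)) (covD_curve hyp_metric \<gamma> (vel \<gamma>) t) (rot90 (vel \<gamma> t))"

definition arclength_param_on :: "real set \<Rightarrow> (real \<Rightarrow> real^2) \<Rightarrow> bool" where
  "arclength_param_on I \<gamma> \<longleftrightarrow> (\<forall>t\<in>I. ip (hyp_metric (\<gamma> t)) (vel \<gamma> t) (vel \<gamma> t) = 1)"

text \<open>The vertical cylinder pi^{-1}(gamma(I)) parametrised by (t,x) |-> (x, gamma t),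
  defined on {u. u$1 in I} (u$1 = t the curve parameter, u$2 = x the fibre coordinate).\<close>
definition cylinder :: "(real \<Rightarrow> real^2) \<Rightarrow> real^2 \<Rightarrow> real^3" where
  "cylinder \<gamma> u = vector [u $ 2, \<gamma> (u $ 1) $ 1, \<gamma> (u $ 1) $ 2]"

end

theory Submission
  imports Defs
begin


lemma cases3: fixes x :: 3 obtains "x = 1" | "x = 2" | "x = 3"
  using exhaust_3 by blast
lemma cases2: fixes x :: 2 obtains "x = 1" | "x = 2"
  using exhaust_2 by blast

lemma deriv_shift_at0: "deriv (\<lambda>r. g (c + r)) 0 = deriv g (c::real)"
  by (simp add: deriv_shift_0[of g c] o_def)

lemma ev_shift:
  fixes c :: real
  assumes "open S" "c \<in> S"
  shows "eventually (\<lambda>r. c + r \<in> S) (nhds 0)"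
proof -
  have "((\<lambda>r. c + r) \<longlongrightarrow> c + 0) (nhds 0)"
    by (intro tendsto_intros) (simp add: tendsto_ident_at filterlim_ident)
  then show ?thesis using assms topological_tendstoD by fastforce
qed

lemma pd_fun:
  fixes F :: "real^'n \<Rightarrow> real"
  assumes "open S" "p $ i \<in> S" "\<And>v. v $ i \<in> S \<Longrightarrow> F v = g (v $ i)"
  shows "pd F i p = deriv g (p $ i)"
proof -
  have "eventually (\<lambda>r. F (p + r *\<^sub>R axis i 1) = g (p$i + r)) (nhds 0)"
    using ev_shift[OF assms(1,2)] by eventually_elim (simp add: assms(3) axis_def)
  then have "deriv (\<lambda>r. F (p + r *\<^sub>R axis i 1)) 0 = deriv (\<lambda>r. g (p$i + r)) 0"
    by (rule deriv_cong_ev) simp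
  then show ?thesis by (simp add: pd_def deriv_shift_at0)
qed

lemma pd_fun0:
  fixes F :: "real^'n \<Rightarrow> real"
  assumes "p $ i \<in> S" "\<And>v. v $ i \<in> S \<Longrightarrow> F v = g (v $ i)" "j \<noteq> i"
  shows "pd F j p = 0"
proof -
  have "(\<lambda>r. F (p + r *\<^sub>R axis j 1)) = (\<lambda>r. g (p$i))"
    using assms by (auto simp: axis_def)
  then show ?thesis by (simp add: pd_def)
qed

lemma matrix_inv_eq:
  fixes A B :: "real^'n^'n"
  assumes "A ** B = mat 1" "B ** A = mat 1"
  shows "matrix_inv A = B"
  unfolding matrix_inv_def
proof (rule some_equality)
  fix C assume C: "A ** C = mat 1 \<and> C ** A = mat 1"
  have "C = C ** (A ** B)" using assms by simp
  also have "\<dots> = (C ** A) ** B" by (simp add: matrix_mul_assoc)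
  also have "\<dots> = B" using C by simp
  finally show "C = B" .
qed (use assms in auto)




lemma Chr_fun:
  fixes h :: "real^'n \<Rightarrow> real^'n^'n"
  assumes "open S" "p$m \<in> S" "\<And>q. q$m \<in> S \<Longrightarrow> h q = M (q$m)"
    "\<And>j l. DERIV (\<lambda>z. M z $ j $ l) (p$m) :> dM $ j $ l"
    "M (p$m) ** Minv = mat 1" "Minv ** M (p$m) = mat 1"
  shows "Chr h k i j p = 1/2 * (\<Sum>l\<in>UNIV. Minv $ k $ l * ((if i = m then dM $ j $ l else 0)
     + (if j = m then dM $ i $ l else 0) - (if l = m then dM $ i $ j else 0)))"
proof -
  have pdh: "pd (\<lambda>q. h q $ j $ l) i p = (if i = m then dM $ j $ l else 0)" for i j l
  proof (cases "i = m")
    case True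
    have "pd (\<lambda>q. h q $ j $ l) i p = deriv (\<lambda>z. M z $ j $ l) (p$m)"
      using pd_fun[OF assms(1), of p m "\<lambda>q. h q $ j $ l" "\<lambda>z. M z $ j $ l"] assms(2,3) True by simp
    also have "\<dots> = dM $ j $ l" by (rule DERIV_imp_deriv[OF assms(4)])
    finally show ?thesis using True by simp
  next
    case False
    then show ?thesis
      using pd_fun0[of p m S "\<lambda>q. h q $ j $ l" "\<lambda>z. M z $ j $ l" i] assms(2,3) by simp
  qed
  have "matrix_inv (h p) = Minv" using assms(2,3,5,6) by (simp add: matrix_inv_eq)
  then show ?thesis unfolding Chr_def pdh by simp
qed

definition M3 :: "real \<Rightarrow> real^3^3" where
  "M3 z = vector [vector [1, 1/z, 0], vector [1/z, 2/z^2, 0], vector [0, 0, 1/z^2]]"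
definition dM3 :: "real \<Rightarrow> real^3^3" where
  "dM3 z = vector [vector [0, -1/z^2, 0], vector [-1/z^2, -4/z^3, 0], vector [0, 0, -2/z^3]]"
definition Mi3 :: "real \<Rightarrow> real^3^3" where
  "Mi3 z = vector [vector [2, -z, 0], vector [-z, z^2, 0], vector [0, 0, z^2]]"
definition C3 :: "real \<Rightarrow> real^3^3^3" where
  "C3 z = vector [
     vector [vector [0, 0, 1/(2*z)], vector [0, 0, 1/z^2], vector [1/(2*z), 1/z^2, 0]],
     vector [vector [0, 0, -1/2], vector [0, 0, -3/(2*z)], vector [-1/2, -3/(2*z), 0]],
     vector [vector [0, 1/2, 0], vector [1/2, 2/z, 0], vector [0, 0, -1/z]]]"
definition dC3 :: "real \<Rightarrow> real^3^3^3" where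
  "dC3 z = vector [
     vector [vector [0, 0, -1/(2*z^2)], vector [0, 0, -2/z^3], vector [-1/(2*z^2), -2/z^3, 0]],
     vector [vector [0, 0, 0], vector [0, 0, 3/(2*z^2)], vector [0, 3/(2*z^2), 0]],
     vector [vector [0, 0, 0], vector [0, -2/z^2, 0], vector [0, 0, 1/z^2]]]"

lemma sl2_M3: "sl2_metric q = M3 (q$3)"
  by (simp add: sl2_metric_def M3_def Let_def)

lemma M3_deriv: "z \<noteq> 0 \<Longrightarrow> DERIV (\<lambda>z. M3 z $ j $ l) z :> dM3 z $ j $ l"
  apply (cases j rule: cases3; cases l rule: cases3)
  apply (simp_all add: M3_def dM3_def)
  apply (auto intro!: derivative_eq_intros simp: field_simps power2_eq_square power3_eq_cube)
  done

lemma M3_inv: "z \<noteq> 0 \<Longrightarrow> M3 z ** Mi3 z = mat 1 \<and> Mi3 z ** M3 z = mat 1"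
  by (simp add: M3_def Mi3_def matrix_matrix_mult_def mat_def vec_eq_iff forall_3 sum_3
      field_simps power2_eq_square)

lemma Chr_sl2: "p$3 \<noteq> 0 \<Longrightarrow> Chr sl2_metric k i j p = C3 (p$3) $ k $ i $ j"
  apply (subst Chr_fun[where S="-{0}" and m=3 and M=M3 and dM="dM3 (p$3)" and Minv="Mi3 (p$3)"])
  apply (auto simp: sl2_M3 M3_deriv M3_inv)[6]
  apply (cases k rule: cases3; cases i rule: cases3; cases j rule: cases3)
  apply (simp_all add: sum_3 Mi3_def dM3_def C3_def field_simps power2_eq_square power3_eq_cube)
  done

lemma C3_deriv: "z \<noteq> 0 \<Longrightarrow> DERIV (\<lambda>z. C3 z $ k $ i $ j) z :> dC3 z $ k $ i $ j"
  apply (cases k rule: cases3; cases i rule: cases3; cases j rule: cases3)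
  apply (simp_all add: C3_def dC3_def)
  apply (auto intro!: derivative_eq_intros simp: field_simps power2_eq_square power3_eq_cube)
  done




definition cvec :: "real^3^3^3 \<Rightarrow> real^3 \<Rightarrow> real^3 \<Rightarrow> real^3" where
  "cvec T X V = (\<chi> c. \<Sum>a\<in>UNIV. \<Sum>b\<in>UNIV. T $ c $ a $ b * X $ a * V $ b)"

definition Rf :: "real \<Rightarrow> real^3 \<Rightarrow> real^3 \<Rightarrow> real^3 \<Rightarrow> real^3" where
  "Rf z u v w = (v$3 *\<^sub>R cvec (dC3 z) u w + cvec (C3 z) v (cvec (C3 z) u w))
     - (u$3 *\<^sub>R cvec (dC3 z) v w + cvec (C3 z) u (cvec (C3 z) v w))"

lemma open_nz: "open (-{0::real})" by (simp add: open_Compl)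

lemma pd_const: "pd (\<lambda>q. c) a p = 0"
  by (simp add: pd_def)

lemma nabla_const: "q$3 \<noteq> 0 \<Longrightarrow> nablaN sl2_metric (\<lambda>_. v) (\<lambda>_. w) q = cvec (C3 (q$3)) v w"
  by (simp add: nablaN_def pd_const cvec_def Chr_sl2 mult.assoc mult.left_commute)

lemma cvec_deriv: "z \<noteq> 0 \<Longrightarrow> DERIV (\<lambda>z. cvec (C3 z) v w $ d) z :> cvec (dC3 z) v w $ d"
  unfolding cvec_def vec_lambda_beta
  by (intro DERIV_sum DERIV_cmult_right[where c="w$_"] DERIV_cmult_right[where c="v$_"] C3_deriv
     | simp add: mult.commute mult.left_commute)+

lemma nabla_const2:
  assumes "p$3 \<noteq> 0"
  shows "nablaN sl2_metric (\<lambda>_. u) (nablaN sl2_metric (\<lambda>_. v) (\<lambda>_. w)) p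
    = u$3 *\<^sub>R cvec (dC3 (p$3)) v w + cvec (C3 (p$3)) u (cvec (C3 (p$3)) v w)"
proof -
  have pdN: "pd (\<lambda>q. nablaN sl2_metric (\<lambda>_. v) (\<lambda>_. w) q $ d) a p
      = (if a = 3 then cvec (dC3 (p$3)) v w $ d else 0)" for a d
  proof (cases "a = 3")
    case True
    have "pd (\<lambda>q. nablaN sl2_metric (\<lambda>_. v) (\<lambda>_. w) q $ d) a p = deriv (\<lambda>z. cvec (C3 z) v w $ d) (p$3)"
      using pd_fun[of "-{0}" p 3 "\<lambda>q. nablaN sl2_metric (\<lambda>_. v) (\<lambda>_. w) q $ d" "\<lambda>z. cvec (C3 z) v w $ d"]
        assms True open_nz by (simp add: nabla_const)
    also have "\<dots> = cvec (dC3 (p$3)) v w $ d" by (rule DERIV_imp_deriv[OF cvec_deriv[OF assms]])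
    finally show ?thesis using True by simp
  next
    case False
    then show ?thesis
      using pd_fun0[of p 3 "-{0}" "\<lambda>q. nablaN sl2_metric (\<lambda>_. v) (\<lambda>_. w) q $ d" "\<lambda>z. cvec (C3 z) v w $ d" a]
        assms by (simp add: nabla_const)
  qed
  define Y where "Y = nablaN sl2_metric (\<lambda>_. v) (\<lambda>_. w)"
  have pdY: "pd (\<lambda>q. Y q $ d) a p = (if a = 3 then cvec (dC3 (p$3)) v w $ d else 0)" for a d
    unfolding Y_def by (rule pdN)
  have Yp: "Y p = cvec (C3 (p$3)) v w" unfolding Y_def using assms by (rule nabla_const)
  show ?thesis
    unfolding Y_def[symmetric] nablaN_def[of _ _ Y] pdY Yp
    by (simp add: vec_eq_iff assms cvec_def Chr_sl2 if_distrib sum.delta' cong: if_cong)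
qed

lemma curv_sl2: "p$3 \<noteq> 0 \<Longrightarrow> curv sl2_metric p u v w = Rf (p$3) u v w"
proof -
  assume p: "p$3 \<noteq> 0"
  have lb: "lie_bracket (\<lambda>_. u) (\<lambda>_. v) = (\<lambda>_. 0)"
    by (simp add: lie_bracket_def pd_const fun_eq_iff vec_eq_iff)
  have n0: "nablaN sl2_metric (\<lambda>_. 0) Z p = 0" for Z :: "real^3 \<Rightarrow> real^3"
    by (simp add: nablaN_def vec_eq_iff)
  show ?thesis
    unfolding curv_def curv_fields_def lb n0 nabla_const2[OF p] Rf_def by simp
qed

definition M2 :: "real \<Rightarrow> real^2^2" where
  "M2 z = vector [vector [1/z^2, 0], vector [0, 1/z^2]]"
definition dM2 :: "real \<Rightarrow> real^2^2" where
  "dM2 z = vector [vector [-2/z^3, 0], vector [0, -2/z^3]]"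
definition Mi2 :: "real \<Rightarrow> real^2^2" where
  "Mi2 z = vector [vector [z^2, 0], vector [0, z^2]]"
definition CH :: "real \<Rightarrow> real^2^2^2" where
  "CH z = vector [vector [vector [0, -1/z], vector [-1/z, 0]],
                  vector [vector [1/z, 0], vector [0, -1/z]]]"

lemma hyp_M2: "hyp_metric q = M2 (q$2)"
  by (simp add: hyp_metric_def M2_def Let_def)

lemma M2_deriv: "z \<noteq> 0 \<Longrightarrow> DERIV (\<lambda>z. M2 z $ j $ l) z :> dM2 z $ j $ l"
  apply (cases j rule: cases2; cases l rule: cases2)
  apply (simp_all add: M2_def dM2_def)
  apply (auto intro!: derivative_eq_intros simp: field_simps power2_eq_square power3_eq_cube)
  done

lemma M2_inv: "z \<noteq> 0 \<Longrightarrow> M2 z ** Mi2 z = mat 1 \<and> Mi2 z ** M2 z = mat 1"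
  by (simp add: M2_def Mi2_def matrix_matrix_mult_def mat_def vec_eq_iff forall_2 sum_2
      field_simps power2_eq_square)

lemma Chr_hyp: "p$2 \<noteq> 0 \<Longrightarrow> Chr hyp_metric k i j p = CH (p$2) $ k $ i $ j"
  apply (subst Chr_fun[where S="-{0}" and m=2 and M=M2 and dM="dM2 (p$2)" and Minv="Mi2 (p$2)"])
  apply (auto simp: hyp_M2 M2_deriv M2_inv)[6]
  apply (cases k rule: cases2; cases i rule: cases2; cases j rule: cases2)
  apply (simp_all add: sum_2 Mi2_def dM2_def CH_def field_simps power2_eq_square power3_eq_cube)
  done




locale cyl =
  fixes I :: "real set" and \<gamma> :: "real \<Rightarrow> real^2"
  assumes openI: "open I" and pos: "\<forall>t\<in>I. \<gamma> t $ 2 > 0"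
    and smooth: "smooth_curve_on I \<gamma>" and arc: "arclength_param_on I \<gamma>"
begin

definition "y0 = (\<lambda>s. \<gamma> s $ 1)"
definition "y1 = deriv y0"
definition "y2 = deriv y1"
definition "y3 = deriv y2"
definition "y4 = deriv y3"
definition "z0 = (\<lambda>s. \<gamma> s $ 2)"
definition "z1 = deriv z0"
definition "z2 = deriv z1"
definition "z3 = deriv z2"
definition "z4 = deriv z3"
definition aa :: "real \<Rightarrow> real" where "aa t = y1 t / z0 t"
definition bb :: "real \<Rightarrow> real" where "bb t = z1 t / z0 t"
definition KK :: "real \<Rightarrow> real" where "KK = signed_curvature \<gamma>"
definition K1 :: "real \<Rightarrow> real" where "K1 = deriv KK"
definition K2 :: "real \<Rightarrow> real" where "K2 = deriv K1"

lemma ydiff: "t \<in> I \<Longrightarrow> (deriv ^^ n) y0 differentiable (at t)"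
  using smooth unfolding smooth_curve_on_def y0_def by blast
lemma zdiff: "t \<in> I \<Longrightarrow> (deriv ^^ n) z0 differentiable (at t)"
  using smooth unfolding smooth_curve_on_def z0_def by blast

lemma dd: "DERIV (f::real\<Rightarrow>real) t :> deriv f t \<longleftrightarrow> f differentiable (at t)"
  by (rule DERIV_deriv_iff_real_differentiable)

lemma y_DERIV: assumes "t \<in> I"
  shows "DERIV y0 t :> y1 t" "DERIV y1 t :> y2 t" "DERIV y2 t :> y3 t" "DERIV y3 t :> y4 t"
  using ydiff[OF assms, of 0] ydiff[OF assms, of 1] ydiff[OF assms, of 2] ydiff[OF assms, of 3]
  by (simp_all add: dd y1_def y2_def y3_def y4_def numeral_eq_Suc)
lemma z_DERIV: assumes "t \<in> I"
  shows "DERIV z0 t :> z1 t" "DERIV z1 t :> z2 t" "DERIV z2 t :> z3 t" "DERIV z3 t :> z4 t"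
  using zdiff[OF assms, of 0] zdiff[OF assms, of 1] zdiff[OF assms, of 2] zdiff[OF assms, of 3]
  by (simp_all add: dd z1_def z2_def z3_def z4_def numeral_eq_Suc)

lemma zpos: "t \<in> I \<Longrightarrow> z0 t > 0"
  using pos by (simp add: z0_def)

lemma vel_eq: "vel \<gamma> t = vector [y1 t, z1 t]"
  by (simp add: vel_def vec_eq_iff forall_2 y1_def z1_def y0_def z0_def)

lemma c0: "t \<in> I \<Longrightarrow> y1 t ^ 2 + z1 t ^ 2 = z0 t ^ 2"
proof -
  assume t: "t \<in> I"
  have "ip (hyp_metric (\<gamma> t)) (vel \<gamma> t) (vel \<gamma> t) = 1" using arc t by (simp add: arclength_param_on_def)
  then have "y1 t ^ 2 / z0 t ^ 2 + z1 t ^ 2 / z0 t ^ 2 = 1"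
    by (simp add: ip_def sum_2 hyp_M2 M2_def vel_eq z0_def power2_eq_square)
  then show ?thesis using zpos[OF t] by (simp add: field_simps)
qed

lemma c1: "t \<in> I \<Longrightarrow> y1 t * y2 t + z1 t * z2 t = z0 t * z1 t"
proof -
  assume t: "t \<in> I"
  define f where "f s = y1 s ^ 2 + z1 s ^ 2 - z0 s ^ 2" for s
  have "DERIV f t :> 2 * y1 t * y2 t + 2 * z1 t * z2 t - 2 * z0 t * z1 t"
    unfolding f_def
    by (auto intro!: derivative_eq_intros y_DERIV z_DERIV t)
  moreover have "DERIV f t :> 0"
  proof -
    have "eventually (\<lambda>s. f s = 0) (nhds t)"
      using eventually_nhds_in_open[OF openI t] by eventually_elim (simp add: f_def c0)
    then show ?thesis by (subst DERIV_cong_ev[of t t f "\<lambda>_. 0"]) auto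
  qed
  ultimately have "2 * y1 t * y2 t + 2 * z1 t * z2 t - 2 * z0 t * z1 t = 0"
    using DERIV_unique by blast
  then show ?thesis by simp
qed

lemma K_eq: "t \<in> I \<Longrightarrow> KK t = (y1 t * z2 t - z1 t * y2 t) / z0 t ^ 2 + y1 t / z0 t"
proof -
  assume t: "t \<in> I"
  have z: "z0 t \<noteq> 0" using zpos[OF t] by simp
  have d1: "(\<lambda>s. vel \<gamma> s $ 1) = y1" and d2: "(\<lambda>s. vel \<gamma> s $ 2) = z1"
    by (simp_all add: vel_eq fun_eq_iff)
  have g2: "\<gamma> t $ 2 = z0 t" by (simp add: z0_def)
  have "KK t = ((y2 t - 2 * y1 t * z1 t / z0 t) * (- z1 t)
      + (z2 t + (y1 t^2 - z1 t^2) / z0 t) * y1 t) / z0 t ^ 2"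
    using z
    by (simp add: KK_def signed_curvature_def covD_curve_def ip_def sum_2 hyp_M2 M2_def d1 d2
      y2_def[symmetric] z2_def[symmetric] Chr_hyp g2 CH_def rot90_def vel_eq
      field_simps power2_eq_square)
  also have "\<dots> = (y1 t * z2 t - z1 t * y2 t) / z0 t ^ 2 + y1 t * (y1 t ^ 2 + z1 t ^ 2) / z0 t ^ 3"
    using z by (simp add: field_simps power2_eq_square power3_eq_cube)
  also have "\<dots> = (y1 t * z2 t - z1 t * y2 t) / z0 t ^ 2 + y1 t / z0 t"
    using z c0[OF t] by (simp add: power2_eq_square power3_eq_cube)
  finally show ?thesis .
qed

end



lemma DERIV_diffble: "DERIV (f::real\<Rightarrow>real) t :> D \<Longrightarrow> f differentiable (at t)"
  by (metis DERIV_deriv_iff_real_differentiable DERIV_imp_deriv)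

context cyl begin

lemma znz: "t \<in> I \<Longrightarrow> z0 t \<noteq> 0" using zpos[of t] by simp

lemma y1_eq: "t \<in> I \<Longrightarrow> y1 t = z0 t * aa t" using znz[of t] by (simp add: aa_def)
lemma z1_eq: "t \<in> I \<Longrightarrow> z1 t = z0 t * bb t" using znz[of t] by (simp add: bb_def)
lemma ab1: "t \<in> I \<Longrightarrow> aa t ^ 2 + bb t ^ 2 = 1"
  using znz[of t] c0[of t] by (simp add: aa_def bb_def field_simps)

lemma z0_D: "t \<in> I \<Longrightarrow> DERIV z0 t :> z0 t * bb t"
  using z_DERIV(1)[of t] z1_eq[of t] by simp

lemma aa_D: "t \<in> I \<Longrightarrow> DERIV aa t :> - bb t * (KK t - aa t)"
proof -
  assume t: "t \<in> I"
  note z = znz[OF t]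
  have "DERIV aa t :> (y2 t * z0 t - y1 t * z1 t) / z0 t ^ 2"
    unfolding aa_def[abs_def]
    by (auto intro!: derivative_eq_intros y_DERIV z_DERIV t simp: z power2_eq_square)
  moreover have "(y2 t * z0 t - y1 t * z1 t) / z0 t ^ 2 = - bb t * (KK t - aa t)"
  proof -
    have e: "y2 t * z0 t^2 - y1 t * z1 t * z0 t = - z1 t * (y1 t * z2 t - z1 t * y2 t)"
      using c0[OF t] c1[OF t] by algebra
    show ?thesis using z e unfolding K_eq[OF t] aa_def bb_def
      apply (simp add: field_simps power2_eq_square)
      by algebra
  qed
  ultimately show ?thesis by simp
qed

lemma bb_D: "t \<in> I \<Longrightarrow> DERIV bb t :> aa t * (KK t - aa t)"
proof -
  assume t: "t \<in> I"
  note z = znz[OF t]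
  have "DERIV bb t :> (z2 t * z0 t - z1 t * z1 t) / z0 t ^ 2"
    unfolding bb_def[abs_def]
    by (auto intro!: derivative_eq_intros y_DERIV z_DERIV t simp: z power2_eq_square)
  moreover have "(z2 t * z0 t - z1 t * z1 t) / z0 t ^ 2 = aa t * (KK t - aa t)"
  proof -
    have e: "z2 t * z0 t^2 - z1 t * z1 t * z0 t = y1 t * (y1 t * z2 t - z1 t * y2 t)"
      using c0[OF t] c1[OF t] by algebra
    show ?thesis using z e unfolding K_eq[OF t] aa_def bb_def
      apply (simp add: field_simps power2_eq_square)
      by algebra
  qed
  ultimately show ?thesis by simp
qed

definition "Kf s = (y1 s * z2 s - z1 s * y2 s) / z0 s ^ 2 + y1 s / z0 s"
definition "Kd s = (y1 s * z3 s - z1 s * y3 s) / z0 s ^ 2 - 2 * z1 s * (y1 s * z2 s - z1 s * y2 s) / z0 s ^ 3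
   + (y2 s * z0 s - y1 s * z1 s) / z0 s ^ 2"

lemma Kf_D: "t \<in> I \<Longrightarrow> DERIV Kf t :> Kd t"
proof -
  assume t: "t \<in> I"
  note z = znz[OF t]
  show ?thesis unfolding Kf_def[abs_def]
    apply (rule derivative_eq_intros y_DERIV z_DERIV t refl | simp add: z)+
    apply (simp add: Kd_def z field_simps power2_eq_square power3_eq_cube)
    by algebra
qed

lemma KK_D: "t \<in> I \<Longrightarrow> DERIV KK t :> K1 t"
proof -
  assume t: "t \<in> I"
  have ev: "eventually (\<lambda>s. KK s = Kf s) (nhds t)"
    using eventually_nhds_in_open[OF openI t] by eventually_elim (simp add: K_eq Kf_def)
  have "DERIV KK t :> Kd t" using DERIV_cong_ev[OF refl ev refl] Kf_D[OF t] by simp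
  then show ?thesis by (simp add: K1_def DERIV_imp_deriv)
qed

lemma K1_eq: "t \<in> I \<Longrightarrow> K1 t = Kd t"
proof -
  assume t: "t \<in> I"
  have ev: "eventually (\<lambda>s. KK s = Kf s) (nhds t)"
    using eventually_nhds_in_open[OF openI t] by eventually_elim (simp add: K_eq Kf_def)
  have "DERIV KK t :> Kd t" using DERIV_cong_ev[OF refl ev refl] Kf_D[OF t] by simp
  then show ?thesis by (simp add: K1_def DERIV_imp_deriv)
qed

lemma K1_D: "t \<in> I \<Longrightarrow> DERIV K1 t :> K2 t"
proof -
  assume t: "t \<in> I"
  note z = znz[OF t]
  have ev: "eventually (\<lambda>s. K1 s = Kd s) (nhds t)"
    using eventually_nhds_in_open[OF openI t] by eventually_elim (simp add: K1_eq)
  have "Kd differentiable (at t)"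
    unfolding Kd_def[abs_def]
    by (intro derivative_intros DERIV_diffble[OF y_DERIV(1)[OF t]] DERIV_diffble[OF y_DERIV(2)[OF t]]
       DERIV_diffble[OF y_DERIV(3)[OF t]] DERIV_diffble[OF y_DERIV(4)[OF t]]
       DERIV_diffble[OF z_DERIV(1)[OF t]] DERIV_diffble[OF z_DERIV(2)[OF t]]
       DERIV_diffble[OF z_DERIV(3)[OF t]] DERIV_diffble[OF z_DERIV(4)[OF t]]; simp add: z)
  then have "DERIV Kd t :> deriv Kd t" by (simp add: DERIV_deriv_iff_real_differentiable)
  then have "DERIV K1 t :> deriv Kd t" using DERIV_cong_ev[OF refl ev refl] by simp
  then show ?thesis by (simp add: K2_def DERIV_imp_deriv)
qed

end



context cyl begin

abbreviation "\<phi> \<equiv> cylinder \<gamma>"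

lemma cyl1: "\<phi> v $ 1 = v $ 2" and cyl2: "\<phi> v $ 2 = y0 (v$1)" and cyl3: "\<phi> v $ 3 = z0 (v$1)"
  by (simp_all add: cylinder_def y0_def z0_def)

lemma dphi1_all: "dphi \<phi> 1 v = vector [0, y1 (v$1), z1 (v$1)]"
proof -
  have a: "pd (\<lambda>v. \<phi> v $ 1) 1 v = 0"
    using pd_fun0[of v 2 UNIV "\<lambda>v. \<phi> v $ 1" "\<lambda>x. x" 1] by (simp add: cyl1)
  have b: "pd (\<lambda>v. \<phi> v $ 2) 1 v = y1 (v$1)"
    using pd_fun[of UNIV v 1 "\<lambda>v. \<phi> v $ 2" y0] by (simp add: cyl2 y1_def)
  have c: "pd (\<lambda>v. \<phi> v $ 3) 1 v = z1 (v$1)"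
    using pd_fun[of UNIV v 1 "\<lambda>v. \<phi> v $ 3" z0] by (simp add: cyl3 z1_def)
  show ?thesis by (simp add: dphi_def vec_eq_iff forall_3 a b c)
qed

lemma dphi2_all: "dphi \<phi> 2 v = vector [1, 0, 0]"
proof -
  have a: "pd (\<lambda>v. \<phi> v $ 1) 2 v = 1"
    using pd_fun[of UNIV v 2 "\<lambda>v. \<phi> v $ 1" "\<lambda>x. x"] by (simp add: cyl1)
  have b: "pd (\<lambda>v. \<phi> v $ 2) 2 v = 0"
    using pd_fun0[of v 1 UNIV "\<lambda>v. \<phi> v $ 2" y0 2] by (simp add: cyl2)
  have c: "pd (\<lambda>v. \<phi> v $ 3) 2 v = 0"
    using pd_fun0[of v 1 UNIV "\<lambda>v. \<phi> v $ 3" z0 2] by (simp add: cyl3)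
  show ?thesis by (simp add: dphi_def vec_eq_iff forall_3 a b c)
qed

definition "P1 t = (vector [0, z0 t * aa t, z0 t * bb t] :: real^3)"
definition "P1d t = (vector [0, z0 t * bb t * aa t + z0 t * (- bb t * (KK t - aa t)),
    z0 t * bb t * bb t + z0 t * (aa t * (KK t - aa t))] :: real^3)"
definition "E1 = (vector [1, 0, 0] :: real^3)"

lemma dphi1: "v$1 \<in> I \<Longrightarrow> dphi \<phi> 1 v = P1 (v$1)"
  by (simp add: dphi1_all P1_def y1_eq z1_eq)
lemma dphi2: "dphi \<phi> 2 v = E1"
  by (simp add: dphi2_all E1_def)

lemma P1_D: "t \<in> I \<Longrightarrow> DERIV (\<lambda>s. P1 s $ c) t :> P1d t $ c"
  apply (cases c rule: cases3)
  apply (simp_all add: P1_def P1d_def)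
  apply (auto intro!: derivative_eq_intros z0_D aa_D bb_D)
  done

definition "Gt t = (vector [vector [1 + aa t ^ 2, aa t], vector [aa t, 1]] :: real^2^2)"
definition "Gi t = (vector [vector [1, - aa t], vector [- aa t, 1 + aa t ^ 2]] :: real^2^2)"
definition "dG t = (vector [vector [2 * aa t * (- bb t * (KK t - aa t)), - bb t * (KK t - aa t)],
    vector [- bb t * (KK t - aa t), 0]] :: real^2^2)"
definition "CG t = (vector [vector [vector [0, 0], vector [0, 0]],
    vector [vector [- bb t * (KK t - aa t), 0], vector [0, 0]]] :: real^2^2^2)"

lemma induced_eq: "v$1 \<in> I \<Longrightarrow> induced sl2_metric \<phi> v = Gt (v$1)"
proof -
  assume v: "v$1 \<in> I"
  note z = znz[OF v]
  show ?thesis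
    using z ab1[OF v]
    by (simp add: induced_def vec_eq_iff forall_2 ip_def sum_3 sl2_M3 M3_def dphi1[OF v] dphi2 P1_def E1_def
        cyl3 Gt_def field_simps power2_eq_square)
      algebra
qed

lemma Gt_inv: "Gt t ** Gi t = mat 1 \<and> Gi t ** Gt t = mat 1"
  by (simp add: Gt_def Gi_def matrix_matrix_mult_def mat_def vec_eq_iff forall_2 sum_2
      algebra_simps power2_eq_square)

lemma Gt_D: "t \<in> I \<Longrightarrow> DERIV (\<lambda>s. Gt s $ j $ l) t :> dG t $ j $ l"
  apply (cases j rule: cases2; cases l rule: cases2)
  apply (simp_all add: Gt_def dG_def)
  using aa_D[of t] apply (auto intro!: derivative_eq_intros)
  done

lemma ChrG: "u$1 \<in> I \<Longrightarrow> Chr (induced sl2_metric \<phi>) k i j u = CG (u$1) $ k $ i $ j"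
  apply (subst Chr_fun[where S=I and m=1 and M=Gt and dM="dG (u$1)" and Minv="Gi (u$1)"])
  apply (auto simp: openI induced_eq Gt_D Gt_inv)[6]
  apply (cases k rule: cases2; cases i rule: cases2; cases j rule: cases2)
  apply (simp_all add: sum_2 Gi_def dG_def CG_def algebra_simps power2_eq_square)
  done

lemma covD1:
  assumes u: "u$1 \<in> I" and V: "\<And>v. v$1 \<in> I \<Longrightarrow> V v = Vf (v$1)"
    and D: "\<And>c. DERIV (\<lambda>s. Vf s $ c) (u$1) :> Vd $ c"
  shows "covD sl2_metric \<phi> V 1 u = Vd + cvec (C3 (z0 (u$1))) (P1 (u$1)) (Vf (u$1))"
proof -
  have p: "pd (\<lambda>v. V v $ c) 1 u = Vd $ c" for c
    using pd_fun[OF openI u, of "\<lambda>v. V v $ c" "\<lambda>s. Vf s $ c"] V DERIV_imp_deriv[OF D] by simp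
  have q: "pd (\<lambda>v. \<phi> v $ a) 1 u = P1 (u$1) $ a" for a
    using dphi1[OF u] by (simp add: dphi_def vec_eq_iff)
  show ?thesis
    using znz[OF u] u
    by (simp add: covD_def vec_eq_iff p q Chr_sl2 cyl3 cvec_def V mult.assoc)
qed

lemma covD2:
  assumes u: "u$1 \<in> I" and V: "\<And>v. v$1 \<in> I \<Longrightarrow> V v = Vf (v$1)"
  shows "covD sl2_metric \<phi> V 2 u = cvec (C3 (z0 (u$1))) E1 (Vf (u$1))"
proof -
  have p: "pd (\<lambda>v. V v $ c) 2 u = 0" for c
    using pd_fun0[OF u, of "\<lambda>v. V v $ c" "\<lambda>s. Vf s $ c" 2] V by simp
  have q: "pd (\<lambda>v. \<phi> v $ a) 2 u = E1 $ a" for a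
    using dphi2[of u] by (simp add: dphi_def vec_eq_iff)
  show ?thesis
    using znz[OF u] u
    by (simp add: covD_def vec_eq_iff p q Chr_sl2 cyl3 cvec_def V mult.assoc)
qed

definition "Nf t = (vector [bb t, - z0 t * bb t, z0 t * aa t] :: real^3)"

lemma tension_eq: "u$1 \<in> I \<Longrightarrow> tension sl2_metric \<phi> u = KK (u$1) *\<^sub>R Nf (u$1)"
proof -
  assume u: "u$1 \<in> I"
  define t where "t = u$1"
  have t: "t \<in> I" using u by (simp add: t_def)
  note z = znz[OF t]
  have c11: "covD sl2_metric \<phi> (dphi \<phi> 1) 1 u = P1d t + cvec (C3 (z0 t)) (P1 t) (P1 t)"
    using covD1[OF u, of "dphi \<phi> 1" P1 "P1d t"] dphi1 P1_D[OF t] by (simp add: t_def)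
  have c12: "covD sl2_metric \<phi> (dphi \<phi> 1) 2 u = cvec (C3 (z0 t)) E1 (P1 t)"
    using covD2[OF u, of "dphi \<phi> 1" P1] dphi1 by (simp add: t_def)
  have c21: "covD sl2_metric \<phi> (dphi \<phi> 2) 1 u = 0 + cvec (C3 (z0 t)) (P1 t) E1"
    using covD1[OF u, of "dphi \<phi> 2" "\<lambda>_. E1" 0] dphi2 by (simp add: t_def)
  have c22: "covD sl2_metric \<phi> (dphi \<phi> 2) 2 u = cvec (C3 (z0 t)) E1 E1"
    using covD2[OF u, of "dphi \<phi> 2" "\<lambda>_. E1"] dphi2 by (simp add: t_def)
  have G: "matrix_inv (induced sl2_metric \<phi> u) = Gi t"
    using induced_eq[OF u] matrix_inv_eq[OF conjunct1[OF Gt_inv] conjunct2[OF Gt_inv]] by (simp add: t_def)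
  show ?thesis
    unfolding tension_def G
    apply (simp add: sum_2 c11 c12 c21 c22 ChrG[OF u] dphi1[OF u] dphi2 t_def[symmetric])
    apply (simp add: vec_eq_iff forall_3 cvec_def sum_3 C3_def P1_def P1d_def E1_def Gi_def CG_def Nf_def)
    using z ab1[OF t]
    apply (simp add: field_simps power2_eq_square)
    done
qed

end



lemma DERIV_eqI: "DERIV f t :> X \<Longrightarrow> X = Y \<Longrightarrow> DERIV f t :> Y" by simp

context cyl begin

definition "Tf t = KK t *\<^sub>R Nf t"
definition "Tfd t = (vector [bb t * K1 t + aa t * KK t * KK t - aa t * aa t * KK t, - z0 t * KK t - z0 t * bb t * K1 t - z0 t * aa t * KK t * KK t + 2 * z0 t * aa t * aa t * KK t, - z0 t * bb t * KK t * KK t + z0 t * aa t * K1 t + 2 * z0 t * aa t * bb t * KK t] :: real^3)"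
definition "U1f t = (vector [- (1/2) * KK t + bb t * K1 t + aa t * KK t * KK t + (1/2) * aa t * aa t * KK t, - z0 t * bb t * K1 t - z0 t * aa t * KK t * KK t - (1/2) * z0 t * aa t * aa t * KK t, - z0 t * bb t * KK t * KK t + z0 t * aa t * K1 t - (1/2) * z0 t * aa t * bb t * KK t] :: real^3)"
definition "U2f t = (vector [(1/2) * aa t * KK t, - (1/2) * z0 t * aa t * KK t, - (1/2) * z0 t * bb t * KK t] :: real^3)"
definition "U1d t = (vector [- (1/2) * K1 t + bb t * K2 t - bb t * KK t * KK t * KK t + 3 * aa t * KK t * K1 t - (1/2) * aa t * aa t * K1 t + aa t * aa t * bb t * KK t, - z0 t * K1 t - z0 t * bb t * K2 t + z0 t * bb t * KK t * KK t * KK t - 3 * z0 t * aa t * KK t * K1 t - z0 t * aa t * bb t * KK t * KK t + (3/2) * z0 t * aa t * aa t * K1 t - (3/2) * z0 t * aa t * aa t * bb t * KK t, - (1/2) * z0 t * KK t * KK t - 3 * z0 t * bb t * KK t * K1 t + z0 t * aa t * K2 t - z0 t * aa t * KK t - z0 t * aa t * KK t * KK t * KK t + (3/2) * z0 t * aa t * bb t * K1 t + z0 t * aa t * aa t * KK t * KK t + (3/2) * z0 t * aa t * aa t * aa t * KK t] :: real^3)"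
definition "U2d t = (vector [- (1/2) * bb t * KK t * KK t + (1/2) * aa t * K1 t + (1/2) * aa t * bb t * KK t, (1/2) * z0 t * bb t * KK t * KK t - (1/2) * z0 t * aa t * K1 t - z0 t * aa t * bb t * KK t, - (1/2) * z0 t * KK t - (1/2) * z0 t * bb t * K1 t - (1/2) * z0 t * aa t * KK t * KK t + z0 t * aa t * aa t * KK t] :: real^3)"

lemma Tf_D: assumes t: "t \<in> I" shows "DERIV (\<lambda>s. Tf s $ c) t :> Tfd t $ c"
proof -
  note ab = ab1[OF t] and D = aa_D[OF t] bb_D[OF t] z0_D[OF t] KK_D[OF t] K1_D[OF t]
  have "\<forall>c. DERIV (\<lambda>s. Tf s $ c) t :> Tfd t $ c"
    unfolding forall_3
    apply (simp add: Tf_def Nf_def Tfd_def)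
    apply (intro conjI)
    apply (rule DERIV_eqI, (rule derivative_eq_intros D refl)+, (algebra | use ab in algebra))+
    done
  then show ?thesis by blast
qed

lemma U1_D: assumes t: "t \<in> I" shows "DERIV (\<lambda>s. U1f s $ c) t :> U1d t $ c"
proof -
  note ab = ab1[OF t] and D = aa_D[OF t] bb_D[OF t] z0_D[OF t] KK_D[OF t] K1_D[OF t]
  have "\<forall>c. DERIV (\<lambda>s. U1f s $ c) t :> U1d t $ c"
    unfolding forall_3
    apply (simp only: U1f_def U1d_def vector_3)
    apply (intro conjI)
    apply (rule DERIV_eqI, (rule derivative_eq_intros D refl)+, (algebra | use ab in algebra))+
    done
  then show ?thesis by blast
qed

lemma U2_D: assumes t: "t \<in> I" shows "DERIV (\<lambda>s. U2f s $ c) t :> U2d t $ c"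
proof -
  note ab = ab1[OF t] and D = aa_D[OF t] bb_D[OF t] z0_D[OF t] KK_D[OF t] K1_D[OF t]
  have "\<forall>c. DERIV (\<lambda>s. U2f s $ c) t :> U2d t $ c"
    unfolding forall_3
    apply (simp only: U2f_def U2d_def vector_3)
    apply (intro conjI)
    apply (rule DERIV_eqI, (rule derivative_eq_intros D refl)+, (algebra | use ab in algebra))+
    done
  then show ?thesis by blast
qed

end



context cyl begin

definition "R11f t = (vector [- (7/4) * bb t * KK t + (1/4) * aa t * aa t * bb t * KK t, (7/4) * z0 t * bb t * KK t - (1/4) * z0 t * aa t * aa t * bb t * KK t, - (7/4) * z0 t * aa t * KK t + (1/4) * z0 t * aa t * aa t * aa t * KK t] :: real^3)"
definition "R12f t = (vector [(1/4) * aa t * bb t * KK t, - (1/4) * z0 t * aa t * bb t * KK t, (1/4) * z0 t * aa t * aa t * KK t] :: real^3)"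
definition "R21f t = (vector [(1/4) * aa t * bb t * KK t, - (1/4) * z0 t * aa t * bb t * KK t, (1/4) * z0 t * aa t * aa t * KK t] :: real^3)"
definition "R22f t = (vector [(1/4) * bb t * KK t, - (1/4) * z0 t * bb t * KK t, (1/4) * z0 t * aa t * KK t] :: real^3)"
definition "Bf t = (vector [- K1 t + bb t * K2 t - 2 * bb t * KK t - bb t * KK t * KK t * KK t + 3 * aa t * KK t * K1 t, - z0 t * bb t * K2 t + 2 * z0 t * bb t * KK t + z0 t * bb t * KK t * KK t * KK t - 3 * z0 t * aa t * KK t * K1 t, - 3 * z0 t * bb t * KK t * K1 t + z0 t * aa t * K2 t - 2 * z0 t * aa t * KK t - z0 t * aa t * KK t * KK t * KK t] :: real^3)"

lemma tension_Tf: "v$1 \<in> I \<Longrightarrow> tension sl2_metric \<phi> v = Tf (v$1)"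
  by (simp add: tension_eq Tf_def)

lemma covDT1: assumes u: "u$1 \<in> I"
  shows "covD sl2_metric \<phi> (tension sl2_metric \<phi>) 1 u = U1f (u$1)"
proof -
  define t where "t = u$1"
  have t: "t \<in> I" using u by (simp add: t_def)
  note z = znz[OF t] and ab = ab1[OF t]
  have "covD sl2_metric \<phi> (tension sl2_metric \<phi>) 1 u = Tfd t + cvec (C3 (z0 t)) (P1 t) (Tf t)"
    using covD1[OF u, of "tension sl2_metric \<phi>" Tf "Tfd t"] tension_Tf Tf_D[OF t] by (simp add: t_def)
  also have "\<dots> = U1f t"
    apply (simp add: vec_eq_iff forall_3 cvec_def sum_3 C3_def P1_def Tf_def Nf_def Tfd_def U1f_def)
    apply (simp add: field_simps z)
    apply (intro conjI)?
    apply ((algebra | use ab in algebra)+)?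
    done
  finally show ?thesis by (simp add: t_def)
qed

lemma covDT2: assumes u: "u$1 \<in> I"
  shows "covD sl2_metric \<phi> (tension sl2_metric \<phi>) 2 u = U2f (u$1)"
proof -
  define t where "t = u$1"
  have t: "t \<in> I" using u by (simp add: t_def)
  note z = znz[OF t] and ab = ab1[OF t]
  have "covD sl2_metric \<phi> (tension sl2_metric \<phi>) 2 u = cvec (C3 (z0 t)) E1 (Tf t)"
    using covD2[OF u, of "tension sl2_metric \<phi>" Tf] tension_Tf by (simp add: t_def)
  also have "\<dots> = U2f t"
    apply (simp add: vec_eq_iff forall_3 cvec_def sum_3 C3_def E1_def Tf_def Nf_def U2f_def)
    apply (simp add: field_simps z)
    apply (intro conjI)?
    apply ((algebra | use ab in algebra)+)?
    done
  finally show ?thesis by (simp add: t_def)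
qed

end



context cyl begin


lemma R11: "t \<in> I \<Longrightarrow> Rf (z0 t) (P1 t) (Tf t) (P1 t) = R11f t"
  using znz[of t] ab1[of t]
  apply (simp add: Rf_def vec_eq_iff forall_3 cvec_def sum_3 C3_def dC3_def P1_def Tf_def Nf_def R11f_def)
  apply (simp add: field_simps)
  apply (intro conjI)?
  apply ((algebra | algebra)+)?
  done

lemma R12: "t \<in> I \<Longrightarrow> Rf (z0 t) ((P1) t) (Tf t) ((\<lambda>_. E1) t) = R12f t"
  using znz[of t] ab1[of t]
  apply (simp add: Rf_def vec_eq_iff forall_3 cvec_def sum_3 C3_def dC3_def P1_def E1_def Tf_def Nf_def R12f_def)
  apply (simp add: field_simps power2_eq_square)?
  apply (intro conjI)?
  apply ((algebra | algebra)+)?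
  done

lemma R21: "t \<in> I \<Longrightarrow> Rf (z0 t) ((\<lambda>_. E1) t) (Tf t) ((P1) t) = R21f t"
  using znz[of t] ab1[of t]
  apply (simp add: Rf_def vec_eq_iff forall_3 cvec_def sum_3 C3_def dC3_def P1_def E1_def Tf_def Nf_def R21f_def)
  apply (simp add: field_simps power2_eq_square)?
  apply (intro conjI)?
  apply ((algebra | algebra)+)?
  done

lemma R22: "t \<in> I \<Longrightarrow> Rf (z0 t) ((\<lambda>_. E1) t) (Tf t) ((\<lambda>_. E1) t) = R22f t"
  using znz[of t] ab1[of t]
  apply (simp add: Rf_def vec_eq_iff forall_3 cvec_def sum_3 C3_def dC3_def P1_def E1_def Tf_def Nf_def R22f_def)
  apply (simp add: field_simps power2_eq_square)?
  apply (intro conjI)?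
  apply ((algebra | algebra)+)?
  done

lemma curv_ij: assumes u: "u$1 \<in> I"
  shows "curv sl2_metric (\<phi> u) (dphi \<phi> 1 u) (tension sl2_metric \<phi> u) (dphi \<phi> 1 u) = R11f (u$1)"
    "curv sl2_metric (\<phi> u) (dphi \<phi> 1 u) (tension sl2_metric \<phi> u) (dphi \<phi> 2 u) = R12f (u$1)"
    "curv sl2_metric (\<phi> u) (dphi \<phi> 2 u) (tension sl2_metric \<phi> u) (dphi \<phi> 1 u) = R21f (u$1)"
    "curv sl2_metric (\<phi> u) (dphi \<phi> 2 u) (tension sl2_metric \<phi> u) (dphi \<phi> 2 u) = R22f (u$1)"
  using R11[OF u] R12[OF u] R21[OF u] R22[OF u] znz[OF u]
  by (simp_all add: curv_sl2 cyl3 dphi1[OF u] dphi2 tension_Tf[OF u])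

lemma covDU: assumes u: "u$1 \<in> I"
  shows "covD sl2_metric \<phi> (\<lambda>v. covD sl2_metric \<phi> (tension sl2_metric \<phi>) 1 v) 1 u
          = U1d (u$1) + cvec (C3 (z0 (u$1))) (P1 (u$1)) (U1f (u$1))"
    "covD sl2_metric \<phi> (\<lambda>v. covD sl2_metric \<phi> (tension sl2_metric \<phi>) 1 v) 2 u
          = cvec (C3 (z0 (u$1))) E1 (U1f (u$1))"
    "covD sl2_metric \<phi> (\<lambda>v. covD sl2_metric \<phi> (tension sl2_metric \<phi>) 2 v) 1 u
          = U2d (u$1) + cvec (C3 (z0 (u$1))) (P1 (u$1)) (U2f (u$1))"
    "covD sl2_metric \<phi> (\<lambda>v. covD sl2_metric \<phi> (tension sl2_metric \<phi>) 2 v) 2 u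
          = cvec (C3 (z0 (u$1))) E1 (U2f (u$1))"
proof -
  have V1: "\<And>v. v$1 \<in> I \<Longrightarrow> covD sl2_metric \<phi> (tension sl2_metric \<phi>) 1 v = U1f (v$1)" by (rule covDT1)
  have V2: "\<And>v. v$1 \<in> I \<Longrightarrow> covD sl2_metric \<phi> (tension sl2_metric \<phi>) 2 v = U2f (v$1)" by (rule covDT2)
  show "covD sl2_metric \<phi> (\<lambda>v. covD sl2_metric \<phi> (tension sl2_metric \<phi>) 1 v) 1 u
          = U1d (u$1) + cvec (C3 (z0 (u$1))) (P1 (u$1)) (U1f (u$1))"
    by (rule covD1[where Vf=U1f, OF u V1 U1_D[OF u]])
  show "covD sl2_metric \<phi> (\<lambda>v. covD sl2_metric \<phi> (tension sl2_metric \<phi>) 1 v) 2 u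
          = cvec (C3 (z0 (u$1))) E1 (U1f (u$1))"
    by (rule covD2[where Vf=U1f, OF u V1])
  show "covD sl2_metric \<phi> (\<lambda>v. covD sl2_metric \<phi> (tension sl2_metric \<phi>) 2 v) 1 u
          = U2d (u$1) + cvec (C3 (z0 (u$1))) (P1 (u$1)) (U2f (u$1))"
    by (rule covD1[where Vf=U2f, OF u V2 U2_D[OF u]])
  show "covD sl2_metric \<phi> (\<lambda>v. covD sl2_metric \<phi> (tension sl2_metric \<phi>) 2 v) 2 u
          = cvec (C3 (z0 (u$1))) E1 (U2f (u$1))"
    by (rule covD2[where Vf=U2f, OF u V2])
qed

lemma bitension_eq: assumes u: "u$1 \<in> I"
  shows "bitension sl2_metric \<phi> u = Bf (u$1)"
proof -
  define t where "t = u$1"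
  have t: "t \<in> I" using u by (simp add: t_def)
  note z = znz[OF t] and ab = ab1[OF t]
  have G: "matrix_inv (induced sl2_metric \<phi> u) = Gi t"
    using induced_eq[OF u] matrix_inv_eq[OF conjunct1[OF Gt_inv] conjunct2[OF Gt_inv]] by (simp add: t_def)
  show ?thesis
    unfolding bitension_def Let_def G
    apply (simp add: sum_2 covDU[OF u] curv_ij[OF u] covDT1[OF u] covDT2[OF u] ChrG[OF u] t_def[symmetric])
    apply (simp add: vec_eq_iff forall_3 cvec_def sum_3 C3_def P1_def E1_def Gi_def CG_def
       U1f_def U2f_def U1d_def U2d_def R11f_def R12f_def R21f_def R22f_def Bf_def)
    using z ab
    apply (simp add: field_simps)?
    apply (intro conjI)?
    apply ((algebra | use ab in algebra)+)?
    done
qed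

lemma normal_eq: assumes u: "u$1 \<in> I"
  shows "normal_part sl2_metric \<phi> u w = w - (\<Sum>i\<in>UNIV. \<Sum>j\<in>UNIV. (Gi (u$1) $ i $ j
       * ip (M3 (z0 (u$1))) w (dphi \<phi> i u)) *\<^sub>R dphi \<phi> j u)"
proof -
  have G: "matrix_inv (induced sl2_metric \<phi> u) = Gi (u$1)"
    using induced_eq[OF u] matrix_inv_eq[OF conjunct1[OF Gt_inv] conjunct2[OF Gt_inv]] by simp
  show ?thesis unfolding normal_part_def G by (simp add: sl2_M3 cyl3)
qed

lemma final_vec: assumes u: "u$1 \<in> I"
  shows "normal_part sl2_metric \<phi> u (bitension sl2_metric \<phi> u) - lam *\<^sub>R normal_part sl2_metric \<phi> u (tension sl2_metric \<phi> u)
    = (K2 (u$1) - KK (u$1) ^ 3 - (2 + lam) * KK (u$1)) *\<^sub>R Nf (u$1)"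
proof -
  define t where "t = u$1"
  have t: "t \<in> I" using u by (simp add: t_def)
  note z = znz[OF t] and ab = ab1[OF t]
  show ?thesis
    unfolding normal_eq[OF u] bitension_eq[OF u] tension_Tf[OF u] t_def[symmetric]
    apply (simp add: sum_2 dphi1[OF u] dphi2 t_def[symmetric])
    apply (simp add: vec_eq_iff forall_3 ip_def sum_3 M3_def P1_def E1_def Gi_def Tf_def Nf_def Bf_def)
    using z ab
    apply (simp add: field_simps)?
    apply (intro conjI)?
    apply ((algebra | use ab in algebra)+)?
    done
qed

lemma Nf_nz: "t \<in> I \<Longrightarrow> Nf t \<noteq> 0"
proof
  assume t: "t \<in> I" and N: "Nf t = 0"
  then have "z0 t * bb t = 0" "z0 t * aa t = 0" by (auto simp: Nf_def vec_eq_iff forall_3)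
  then have "aa t = 0" "bb t = 0" using znz[OF t] by auto
  then show False using ab1[OF t] by simp
qed

lemma main: "biminimal_on sl2_metric lam \<phi> {u. u $ 1 \<in> I}
     \<longleftrightarrow> (\<forall>t\<in>I. K2 t = (KK t) ^ 3 + (2 + lam) * KK t)"
proof -
  have "biminimal_on sl2_metric lam \<phi> {u. u $ 1 \<in> I}
     \<longleftrightarrow> (\<forall>u::real^2. u$1 \<in> I \<longrightarrow> K2 (u$1) - KK (u$1) ^ 3 - (2 + lam) * KK (u$1) = 0)"
  proof -
    have "(normal_part sl2_metric \<phi> u (bitension sl2_metric \<phi> u) - lam *\<^sub>R normal_part sl2_metric \<phi> u (tension sl2_metric \<phi> u) = 0)
      \<longleftrightarrow> K2 (u$1) - KK (u$1) ^ 3 - (2 + lam) * KK (u$1) = 0" if u: "u$1 \<in> I" for u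
      unfolding final_vec[OF u] using Nf_nz[OF u] by simp
    then show ?thesis unfolding biminimal_on_def by auto
  qed
  also have "\<dots> \<longleftrightarrow> (\<forall>t\<in>I. K2 t - KK t ^ 3 - (2 + lam) * KK t = 0)"
  proof
    assume H: "\<forall>u::real^2. u$1 \<in> I \<longrightarrow> K2 (u$1) - KK (u$1) ^ 3 - (2 + lam) * KK (u$1) = 0"
    show "\<forall>t\<in>I. K2 t - KK t ^ 3 - (2 + lam) * KK t = 0"
    proof
      fix t assume "t \<in> I"
      then show "K2 t - KK t ^ 3 - (2 + lam) * KK t = 0"
        using H[rule_format, of "vector [t, 0]"] by simp
    qed
  qed auto
  also have "\<dots> \<longleftrightarrow> (\<forall>t\<in>I. K2 t = (KK t) ^ 3 + (2 + lam) * KK t)"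
    by (auto simp: algebra_simps)
  finally show ?thesis .
qed

end

theorem proposition5p3:
  fixes I :: "real set" and \<gamma> :: "real \<Rightarrow> real^2" and lam :: real
  assumes "open I" and "is_interval I" and "I \<noteq> {}"
    and "\<forall>t\<in>I. \<gamma> t $ 2 > 0"
    and "smooth_curve_on I \<gamma>"
    and "arclength_param_on I \<gamma>"
  shows "biminimal_on sl2_metric lam (cylinder \<gamma>) {u. u $ 1 \<in> I}
     \<longleftrightarrow> (\<forall>t\<in>I. deriv (deriv (signed_curvature \<gamma>)) t
              = (signed_curvature \<gamma> t) ^ 3 + (2 + lam) * signed_curvature \<gamma> t)"
proof -
  interpret cyl I \<gamma> using assms by unfold_locales auto
  show ?thesis using main[of lam] by (simp add: K2_def K1_def KK_def)
qed


end
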